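(* For every smooth $A[G]$-module $V$ and every $1\le r\le\infty$, the canonical map $\mathcal{F}_r(V)\to\mathcal{L}_r(V)$ (inclusion into $V^{U_1(\varpi^r)}$ followed by localization at $\mathfrak n$) is injective.
   Context: Setting: $F/\mathbb{Q}_p$ finite (integers $\mathcal{O}_F$, uniformizer $\varpi$, residue field $k_F$), $K/\mathbb{Q}_\ell$ finite with $\ell\ne p$ (integers $\mathcal{O}$, maximal ideal $\lambda$), $G=\mathrm{GL}_n(F)$ with $\ell\nmid\#\mathrm{GL}_n(k_F)$, $A$ an $\mathcal{O}$-algebra. $U_1(\varpi^r)$ is the mirahoric subgroup (elements of $\mathrm{GL}_n(\mathcal{O}_F)$ with last row $\equiv(0,\dots,0,1)\bmod\varpi^r$; for $r=\infty$, the mirabolic subgroup $P(\mathcal{O}_F)$). The commuting operators $U^{(j)}=[U_1(\varpi^r)\mathrm{diag}(\varpi1_j,1_{n-j})U_1(\varpi^r)]$, $1\le j\le n-1$, make $V^{U_1(\varpi^r)}$ an $\mathcal{O}[X_1,\dots,X_{n-1}]$-module ($X_j\mapsto U^{(j)}$). $\mathfrak n=(\lambda,X_1,\dots,X_{n-1})$, $\mathcal{L}_r(V)=(V^{U_1(\varpi^r)})_{\mathfrak n}$, and $\mathcal{F}_r(V)=\{x\in V^{U_1(\varpi^r)}:U^{(1)}x=\dots=U^{(n-1)}x=0\}$. *)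

theory Defs
  imports "Jordan_Normal_Form.Determinant" "HOL-Library.Extended_Nat"
begin

(* v :: 'f => int is a normalised discrete valuation; the value at 0 is irrelevant,
   "vge v x N" means v(x) >= N with the convention v(0) = +infinity. *)
definition vge :: "('f::zero \<Rightarrow> int) \<Rightarrow> 'f \<Rightarrow> int \<Rightarrow> bool" where
  "vge v x N \<longleftrightarrow> x = 0 \<or> N \<le> v x"

definition integers :: "('f::zero \<Rightarrow> int) \<Rightarrow> 'f set" where
  "integers v = {x. vge v x 0}"

definition maxideal :: "('f::zero \<Rightarrow> int) \<Rightarrow> 'f set" where
  "maxideal v = {x. vge v x 1}"

definition residue_classes :: "('f::ab_group_add \<Rightarrow> int) \<Rightarrow> 'f set set" where
  "residue_classes v = integers v //
     {(x,y). x \<in> integers v \<and> y \<in> integers v \<and> vge v (x - y) 1}"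

(* (F, v) is a finite extension of Q_p: a field of characteristic 0, complete for a
   discrete valuation v (normalised, surjective onto Z), with finite residue field of
   characteristic p. *)
definition local_field_over :: "nat \<Rightarrow> ('f::field_char_0 \<Rightarrow> int) \<Rightarrow> bool" where
  "local_field_over p v \<longleftrightarrow> prime p \<and>
     (\<forall>x y. x \<noteq> 0 \<longrightarrow> y \<noteq> 0 \<longrightarrow> v (x * y) = v x + v y) \<and>
     (\<forall>x y. x \<noteq> 0 \<longrightarrow> y \<noteq> 0 \<longrightarrow> x + y \<noteq> 0 \<longrightarrow> min (v x) (v y) \<le> v (x + y)) \<and>
     (\<exists>u. u \<noteq> 0 \<and> v u = 1) \<and>
     (\<forall>s::nat \<Rightarrow> 'f. (\<forall>N. \<exists>M. \<forall>i\<ge>M. \<forall>k\<ge>M. vge v (s i - s k) N) \<longrightarrow>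
          (\<exists>L. \<forall>N. \<exists>M. \<forall>i\<ge>M. vge v (s i - L) N)) \<and>
     finite (residue_classes v) \<and>
     0 < v (of_nat p)"

(* congruence a == b mod varpi^r, r in {1,2,...} \<union> {infinity}; for r = infinity it is equality *)
definition congr :: "('f::ab_group_add \<Rightarrow> int) \<Rightarrow> 'f \<Rightarrow> 'f \<Rightarrow> enat \<Rightarrow> bool" where
  "congr v a b r \<longleftrightarrow> a = b \<or> (vge v (a - b) 0 \<and> r \<le> enat (nat (v (a - b))))"

definition GLn :: "nat \<Rightarrow> 'f::field mat set" where
  "GLn n = {g \<in> carrier_mat n n. det g \<noteq> 0}"

definition GL_O :: "('f::field \<Rightarrow> int) \<Rightarrow> nat \<Rightarrow> 'f mat set" where
  "GL_O v n = {g \<in> carrier_mat n n. (\<forall>i<n. \<forall>k<n. g $$ (i,k) \<in> integers v) \<and>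
                  det g \<noteq> 0 \<and> v (det g) = 0}"

(* mirahoric subgroup U_1(varpi^r); for r = infinity the mirabolic P(O_F) *)
definition mirahoric :: "('f::field \<Rightarrow> int) \<Rightarrow> nat \<Rightarrow> enat \<Rightarrow> 'f mat set" where
  "mirahoric v n r = {g \<in> GL_O v n. (\<forall>k<n-1. congr v (g $$ (n-1,k)) 0 r) \<and>
                                     congr v (g $$ (n-1,n-1)) 1 r}"

(* principal congruence subgroup 1 + varpi^m M_n(O_F) (a neighbourhood basis of 1 for m >= 1) *)
definition princ_cong :: "('f::field \<Rightarrow> int) \<Rightarrow> nat \<Rightarrow> nat \<Rightarrow> 'f mat set" where
  "princ_cong v n m = {g \<in> carrier_mat n n.
      \<forall>i<n. \<forall>k<n. vge v (g $$ (i,k) - (if i = k then 1 else 0)) (int m)}"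

definition diag_mat :: "'f::field \<Rightarrow> nat \<Rightarrow> nat \<Rightarrow> 'f mat" where
  "diag_mat u n j = mat n n (\<lambda>(i,k). if i = k then (if i < j then u else 1) else 0)"

definition dcoset :: "'f::field mat set \<Rightarrow> 'f mat \<Rightarrow> 'f mat set" where
  "dcoset U g = {u1 * g * u2 | u1 u2. u1 \<in> U \<and> u2 \<in> U}"

definition lcosets :: "'f::field mat set \<Rightarrow> 'f mat set \<Rightarrow> 'f mat set set" where
  "lcosets U D = (\<lambda>h. (\<lambda>u. h * u) ` U) ` D"

(* [U g U] x = sum over hU in UgU/U of h.x  (for U-invariant x) *)
definition hecke :: "('f::field mat \<Rightarrow> 'v::comm_monoid_add \<Rightarrow> 'v) \<Rightarrow> 'f mat set \<Rightarrow> 'f mat \<Rightarrow> 'v \<Rightarrow> 'v" where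
  "hecke act U g x = (\<Sum>c\<in>lcosets U (dcoset U g). act (SOME h. h \<in> c) x)"

definition invariants :: "('f::field mat \<Rightarrow> 'v \<Rightarrow> 'v) \<Rightarrow> 'f mat set \<Rightarrow> 'v set" where
  "invariants act U = {x. \<forall>g\<in>U. act g x = x}"

definition Uop :: "('f::field \<Rightarrow> int) \<Rightarrow> 'f \<Rightarrow> nat \<Rightarrow> enat \<Rightarrow> ('f mat \<Rightarrow> 'v::comm_monoid_add \<Rightarrow> 'v) \<Rightarrow> nat \<Rightarrow> 'v \<Rightarrow> 'v" where
  "Uop v u n r act j = hecke act (mirahoric v n r) (diag_mat u n j)"

definition Fr :: "('f::field \<Rightarrow> int) \<Rightarrow> 'f \<Rightarrow> nat \<Rightarrow> enat \<Rightarrow> ('f mat \<Rightarrow> 'v::comm_monoid_add \<Rightarrow> 'v) \<Rightarrow> 'v set" where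
  "Fr v u n r act = {x \<in> invariants act (mirahoric v n r). \<forall>j\<in>{1..n-1}. Uop v u n r act j x = 0}"

(* polynomials in O[X_1,...,X_{n-1}]: finitely supported coefficient functions on
   monomials (exponent vectors m :: nat => nat supported in {1..n-1}) with coefficients in O *)
definition OX :: "('k::field \<Rightarrow> int) \<Rightarrow> nat \<Rightarrow> ((nat \<Rightarrow> nat) \<Rightarrow> 'k) set" where
  "OX w n = {f. finite {m. f m \<noteq> 0} \<and>
                (\<forall>m. f m \<noteq> 0 \<longrightarrow> (\<forall>j. m j \<noteq> 0 \<longrightarrow> 1 \<le> j \<and> j \<le> n - 1)) \<and>
                (\<forall>m. f m \<in> integers w)}"

(* the maximal ideal n = (lambda, X_1, ..., X_{n-1}) : polynomials whose constant term lies in lambda *)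
definition nideal :: "('k::field \<Rightarrow> int) \<Rightarrow> nat \<Rightarrow> ((nat \<Rightarrow> nat) \<Rightarrow> 'k) set" where
  "nideal w n = {f \<in> OX w n. f (\<lambda>_. 0) \<in> maxideal w}"

definition mono_op :: "(nat \<Rightarrow> 'v \<Rightarrow> 'v) \<Rightarrow> nat \<Rightarrow> (nat \<Rightarrow> nat) \<Rightarrow> 'v \<Rightarrow> 'v" where
  "mono_op T n m = foldr (\<lambda>j h. (T j ^^ m j) \<circ> h) [1..<n] id"

(* action of a polynomial f : X_j acts as T j, constants c act via c . x = alg c . x *)
definition poly_op :: "('a \<Rightarrow> 'v::comm_monoid_add \<Rightarrow> 'v) \<Rightarrow> ('k::zero \<Rightarrow> 'a) \<Rightarrow> (nat \<Rightarrow> 'v \<Rightarrow> 'v) \<Rightarrow> nat \<Rightarrow>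
                       ((nat \<Rightarrow> nat) \<Rightarrow> 'k) \<Rightarrow> 'v \<Rightarrow> 'v" where
  "poly_op sa alg T n f x = (\<Sum>m\<in>{m. f m \<noteq> 0}. sa (alg (f m)) (mono_op T n m x))"

(* x/1 = y/1 in the localisation M_n :  exists s notin n with s.(x - y) = 0 *)
definition loc_eq :: "('k::field \<Rightarrow> int) \<Rightarrow> ('a \<Rightarrow> 'v::ab_group_add \<Rightarrow> 'v) \<Rightarrow> ('k \<Rightarrow> 'a) \<Rightarrow>
                      (nat \<Rightarrow> 'v \<Rightarrow> 'v) \<Rightarrow> nat \<Rightarrow> 'v \<Rightarrow> 'v \<Rightarrow> bool" where
  "loc_eq w sa alg T n x y \<longleftrightarrow> (\<exists>s \<in> OX w n - nideal w n. poly_op sa alg T n s (x - y) = 0)"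

definition O_algebra :: "('k::field \<Rightarrow> int) \<Rightarrow> ('k \<Rightarrow> 'a::ring_1) \<Rightarrow> bool" where
  "O_algebra w alg \<longleftrightarrow> alg 1 = 1 \<and>
     (\<forall>a\<in>integers w. \<forall>b\<in>integers w. alg (a + b) = alg a + alg b \<and> alg (a * b) = alg a * alg b) \<and>
     (\<forall>c\<in>integers w. \<forall>a. alg c * a = a * alg c)"

definition smooth_module :: "('f::field \<Rightarrow> int) \<Rightarrow> nat \<Rightarrow> ('a::ring_1 \<Rightarrow> 'v::ab_group_add \<Rightarrow> 'v) \<Rightarrow>
                             ('f mat \<Rightarrow> 'v \<Rightarrow> 'v) \<Rightarrow> bool" where
  "smooth_module v n sa act \<longleftrightarrow>
     (\<forall>a b x. sa (a + b) x = sa a x + sa b x) \<and>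
     (\<forall>a x y. sa a (x + y) = sa a x + sa a y) \<and>
     (\<forall>a b x. sa (a * b) x = sa a (sa b x)) \<and>
     (\<forall>x. sa 1 x = x) \<and>
     (\<forall>x. act (1\<^sub>m n) x = x) \<and>
     (\<forall>g\<in>GLn n. \<forall>h\<in>GLn n. \<forall>x. act (g * h) x = act g (act h x)) \<and>
     (\<forall>g\<in>GLn n. \<forall>x y. act g (x + y) = act g x + act g y) \<and>
     (\<forall>g\<in>GLn n. \<forall>a x. act g (sa a x) = sa a (act g x)) \<and>
     (\<forall>x. \<exists>m\<ge>1. \<forall>g\<in>princ_cong v n m. act g x = x)"

end

theory Submission
  imports Defs
begin

lemma diag_GLn:
  assumes "(u::'f::field) \<noteq> 0"
  shows "Defs.diag_mat u n j \<in> GLn n"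
proof -
  let ?D = "Defs.diag_mat u n j"
  have c: "?D \<in> carrier_mat n n" unfolding Defs.diag_mat_def by auto
  have ut: "upper_triangular ?D" unfolding upper_triangular_def Defs.diag_mat_def by auto
  have "det ?D = prod_list (Matrix.diag_mat ?D)" using det_upper_triangular[OF ut c] .
  moreover have "0 \<notin> set (Matrix.diag_mat ?D)"
    using assms unfolding Matrix.diag_mat_def Defs.diag_mat_def by auto
  ultimately have "det ?D \<noteq> 0" by (simp add: prod_list_zero_iff)
  thus ?thesis using c unfolding GLn_def by auto
qed

lemma GLn_mult: "A \<in> GLn n \<Longrightarrow> B \<in> GLn n \<Longrightarrow> A * B \<in> GLn n"
  unfolding GLn_def by (auto simp: det_mult)

lemma coset_GLn:
  assumes c: "c \<in> lcosets U (dcoset U g)" and U: "U \<subseteq> GLn n" "U \<noteq> {}"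
    and g: "g \<in> GLn n"
  shows "(SOME h. h \<in> c) \<in> GLn n"
proof -
  from c obtain h0 where h0: "h0 \<in> dcoset U g" and ce: "c = (\<lambda>u. h0 * u) ` U"
    unfolding lcosets_def by auto
  from h0 obtain u1 u2 where "h0 = u1 * g * u2" "u1 \<in> U" "u2 \<in> U"
    unfolding dcoset_def by auto
  hence h0G: "h0 \<in> GLn n" using U g by (auto intro!: GLn_mult)
  have all: "\<forall>h\<in>c. h \<in> GLn n" using ce h0G U by (auto intro!: GLn_mult)
  have "c \<noteq> {}" using ce U by auto
  hence "(SOME h. h \<in> c) \<in> c" by (meson ex_in_conv someI_ex)
  thus ?thesis using all by auto
qed

lemma hecke_lin:
  fixes act :: "'f::field mat \<Rightarrow> 'v::ab_group_add \<Rightarrow> 'v"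
  assumes add: "\<forall>g\<in>GLn n. \<forall>x y. act g (x + y) = act g x + act g y"
    and U: "U \<subseteq> GLn n" "U \<noteq> {}" and g: "g \<in> GLn n"
  shows "hecke act U g (x - y) = hecke act U g x - hecke act U g y"
    and "hecke act U g 0 = 0"
proof -
  have sub: "act h (x - y) = act h x - act h y" if "h \<in> GLn n" for h x y
  proof -
    have "act h (x - y + y) = act h (x - y) + act h y" using add that by blast
    thus ?thesis by (simp add: algebra_simps)
  qed
  have z: "act h 0 = 0" if "h \<in> GLn n" for h
    using sub[OF that, of 0 0] by simp
  show "hecke act U g (x - y) = hecke act U g x - hecke act U g y"
    unfolding hecke_def sum_subtractf[symmetric]
    by (rule sum.cong) (auto intro!: sub coset_GLn[OF _ U g])
  show "hecke act U g 0 = 0"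
    unfolding hecke_def by (rule sum.neutral) (auto intro!: z coset_GLn[OF _ U g])
qed

lemma funpow_zero:
  fixes T :: "'b \<Rightarrow> 'v::zero \<Rightarrow> 'v"
  shows "(\<forall>j. T j 0 = 0) \<Longrightarrow> (T a ^^ (k::nat)) 0 = 0"
proof (induction k)
  case 0 show ?case by simp
next
  case (Suc k) thus ?case by (simp del: funpow.simps add: funpow_Suc_right)
qed

lemma foldr_mono:
  fixes T :: "'b \<Rightarrow> 'v::zero \<Rightarrow> 'v"
  assumes "\<forall>j\<in>set xs. T j z = 0" "\<forall>j. T j 0 = (0::'v::zero)"
  shows "foldr (\<lambda>j h. (T j ^^ m j) \<circ> h) xs id z = (if \<forall>j\<in>set xs. m j = 0 then z else 0)"
  using assms
proof (induction xs)
  case Nil then show ?case by simp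
next
  case (Cons a xs)
  have IH: "foldr (\<lambda>j h. (T j ^^ m j) \<circ> h) xs id z = (if \<forall>j\<in>set xs. m j = 0 then z else 0)"
    by (rule Cons.IH) (use Cons.prems in auto)
  have Ta: "T a z = 0" using Cons.prems by auto
  have st: "foldr (\<lambda>j h. (T j ^^ m j) \<circ> h) (a#xs) id z = (T a ^^ m a) (foldr (\<lambda>j h. (T j ^^ m j) \<circ> h) xs id z)"
    by simp
  show ?case
  proof (cases "m a")
    case 0 then show ?thesis unfolding st IH by simp
  next
    case (Suc k)
    have "(T a ^^ m a) z = 0" using Suc Ta funpow_zero[of T, OF Cons.prems(2)]
      by (simp add: funpow_Suc_right del: funpow.simps)
    then show ?thesis unfolding st IH using Suc funpow_zero[of T, OF Cons.prems(2)] Cons.prems(2) by auto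
  qed
qed

theorem lemma4:
  fixes v :: "'f::field_char_0 \<Rightarrow> int" and w :: "'k::field_char_0 \<Rightarrow> int"
    and p l n :: nat and u :: 'f and r :: enat
    and alg :: "'k \<Rightarrow> 'a::ring_1" and sa :: "'a \<Rightarrow> 'v::ab_group_add \<Rightarrow> 'v"
    and act :: "'f mat \<Rightarrow> 'v \<Rightarrow> 'v"
  assumes F: "local_field_over p v" and unif: "u \<noteq> 0" "v u = 1"
    and K: "local_field_over l w" and lp: "l \<noteq> p"
    and n: "1 \<le> n"
    and ndiv: "\<not> l dvd (\<Prod>i<n. card (residue_classes v) ^ n - card (residue_classes v) ^ i)"
    and A: "O_algebra w alg"
    and V: "smooth_module v n sa act"
    and r: "1 \<le> r"
  shows "\<forall>x\<in>Fr v u n r act. \<forall>y\<in>Fr v u n r act.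
           loc_eq w sa alg (Uop v u n r act) n x y \<longrightarrow> x = y"
proof (intro ballI impI)
  fix x y assume x: "x \<in> Fr v u n r act" and y: "y \<in> Fr v u n r act"
    and le: "loc_eq w sa alg (Uop v u n r act) n x y"
  let ?U = "mirahoric v n r"
  let ?T = "Uop v u n r act"
  define z where "z = x - y"
  have v1: "v 1 = 0" using F unfolding local_field_over_def
    by (metis add_cancel_left_right mult_1 one_neq_zero)
  have w1: "w 1 = 0" using K unfolding local_field_over_def
    by (metis add_cancel_left_right mult_1 one_neq_zero)
  have UG: "?U \<subseteq> GLn n" unfolding mirahoric_def GL_O_def GLn_def by auto
  have oneU: "1\<^sub>m n \<in> ?U"
    using n v1 unfolding mirahoric_def GL_O_def integers_def vge_def congr_def by auto
  hence Une: "?U \<noteq> {}" by auto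
  have add: "\<forall>g\<in>GLn n. \<forall>x y. act g (x + y) = act g x + act g y"
    using V unfolding smooth_module_def by blast
  have T0: "\<forall>j. ?T j 0 = 0"
    using hecke_lin(2)[OF add UG Une diag_GLn[OF unif(1)]] unfolding Uop_def by auto
  have Tz: "\<forall>j\<in>{1..<n}. ?T j z = 0"
  proof
    fix j assume j: "j \<in> {1..<n}"
    have "?T j z = ?T j x - ?T j y"
      unfolding z_def Uop_def by (rule hecke_lin(1)[OF add UG Une diag_GLn[OF unif(1)]])
    moreover have "?T j x = 0" "?T j y = 0" using x y j unfolding Fr_def by auto
    ultimately show "?T j z = 0" by simp
  qed
  have sa0: "sa a 0 = 0" for a
  proof -
    have "sa a (0 + 0) = sa a 0 + sa a 0" using V unfolding smooth_module_def by blast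
    thus ?thesis by simp
  qed
  from le obtain s where s: "s \<in> OX w n" "s \<notin> nideal w n"
    and sz: "poly_op sa alg ?T n s z = 0"
    unfolding loc_eq_def z_def by auto
  define c where "c = s (\<lambda>_. 0)"
  have cI: "c \<in> integers w" using s unfolding OX_def c_def by auto
  have cM: "c \<notin> maxideal w" using s unfolding nideal_def c_def by auto
  have c0: "c \<noteq> 0" using cM unfolding maxideal_def vge_def by auto
  have wc: "w c = 0" using cI cM c0 unfolding integers_def maxideal_def vge_def by auto
  define M where "M = {m. s m \<noteq> 0}"
  have fin: "finite M" using s unfolding OX_def M_def by auto
  have zM: "(\<lambda>_. 0) \<in> M" using c0 unfolding M_def c_def by auto
  have rest: "sa (alg (s m)) (mono_op ?T n m z) = 0" if m: "m \<in> M - {(\<lambda>_. 0)}" for m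
  proof -
    obtain j where mj: "m j \<noteq> 0" using m by (metis DiffE ext insertI1)
    have "1 \<le> j \<and> j \<le> n - 1" using s m mj unfolding OX_def M_def by auto
    hence "j \<in> set [1..<n]" by auto
    hence "mono_op ?T n m z = 0" unfolding mono_op_def
      using foldr_mono[of "[1..<n]" ?T z m] Tz T0 mj by auto
    thus ?thesis by (simp add: sa0)
  qed
  have "poly_op sa alg ?T n s z = sa (alg c) (mono_op ?T n (\<lambda>_. 0) z)
      + (\<Sum>m\<in>M - {(\<lambda>_. 0)}. sa (alg (s m)) (mono_op ?T n m z))"
    unfolding poly_op_def M_def[symmetric] c_def using sum.remove[OF fin zM] by blast
  also have "(\<Sum>m\<in>M - {(\<lambda>_. 0)}. sa (alg (s m)) (mono_op ?T n m z)) = 0"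
    using rest by (intro sum.neutral) blast
  also have "mono_op ?T n (\<lambda>_. 0) z = z"
    proof -
    have "foldr (\<lambda>j h. (?T j ^^ (\<lambda>_. 0::nat) j) \<circ> h) xs id = id" for xs
      by (induction xs) auto
    moreover have "foldr (\<lambda>j. (\<circ>) (id::'v\<Rightarrow>'v)) xs id = id" for xs
      by (induction xs) auto
    ultimately show ?thesis unfolding mono_op_def funpow_0 by (metis id_apply)
  qed
  finally have scz: "sa (alg c) z = 0" using sz by simp
  define ci where "ci = inverse c"
  have wm: "\<forall>x y. x \<noteq> 0 \<longrightarrow> y \<noteq> 0 \<longrightarrow> w (x * y) = w x + w y"
    using K unfolding local_field_over_def by blast
  have "ci \<noteq> 0" using c0 unfolding ci_def by simp
  hence "w (c * ci) = w c + w ci" using wm c0 by blast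
  hence "w ci = 0" using wc w1 c0 unfolding ci_def by simp
  hence ciI: "ci \<in> integers w" unfolding integers_def vge_def by auto
  have "alg ci * alg c = 1" using A ciI cI c0 unfolding O_algebra_def ci_def
    by (metis field_class.field_inverse)
  hence "z = sa (alg ci * alg c) z" using V unfolding smooth_module_def by simp
  also have "\<dots> = sa (alg ci) (sa (alg c) z)" using V unfolding smooth_module_def by blast
  also have "\<dots> = 0" using scz sa0 by simp
  finally show "x = y" unfolding z_def by simp
qed

end
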